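(* Let $G$ be a layered graph over $\Sigma_{in}$ of depth $n$ and $\mathsf{C}$ a $(G,\Sigma_{out})$-code. Fix $w\in\Sigma_{out}^n$ and $\epsilon>0$. For any subset $S\subseteq L(\mathsf{C},w,\epsilon)$, there is a prefix tree of $S$.
   Context: A layered graph over alphabet $\Sigma$ of depth $n$ is a directed graph whose vertices are partitioned into layers $0,1,\dots,n$, with exactly one vertex (the root) in layer $0$, and where each vertex in layer $i<n$ has exactly $|\Sigma|$ out-edges to vertices in layer $i+1$, the out-edges being labeled by the distinct elements of $\Sigma$ (the endpoints need not be distinct). A string $p\in\Sigma_{in}^i$ determines a unique path from the root to layer $i$; $v(p)$ is its endpoint. A $(G,\Sigma_{out})$-code $\mathsf{C}$ is an assignment of an element of $\Sigma_{out}$ to each edge of $G$; $\mathsf{C}(p)\in\Sigma_{out}^i$ is the string of labels along the path $p$. For $x,y\in\Sigma^m$, $\Delta$ is Hamming distance and the suffix distance is $\Delta_{sfx}(x,y)=\max_{0\le i\le m-1}\frac{\Delta(x[i+1:m],y[i+1:m])}{m-i}$. Define $L_i(\mathsf{C},w,\epsilon)=\{v(p): p\in\Sigma_{in}^i,\ \Delta_{sfx}(\mathsf{C}(p),w[1:i])<1-\epsilon\}$ and $L(\mathsf{C},w,\epsilon)=\bigcup_{i=1}^n L_i(\mathsf{C},w,\epsilon)$. For $S\subseteq L(\mathsf{C},w,\epsilon)$, a prefix tree of $S$ is a union of paths $p(v)$, one for each $v\in S$, where $p(v)$ goes from the root to $v$ and satisfies $\Delta_{sfx}(\mathsf{C}(p(v)),w[1:|p(v)|])<1-\epsilon$,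 such that this union forms a rooted tree. *)

theory Defs
  imports Complex_Main
begin

text \<open>Edges are identified with pairs (v, a),
  so parallel edges (distinct labels, same endpoints) are allowed.\<close>

definition layered_graph ::
  "'a set \<Rightarrow> nat \<Rightarrow> 'v set \<Rightarrow> ('v \<Rightarrow> nat) \<Rightarrow> 'v \<Rightarrow> ('v \<Rightarrow> 'a \<Rightarrow> 'v) \<Rightarrow> bool" where
  "layered_graph Sig n V lay r0 delta \<longleftrightarrow>
     finite V \<and> finite Sig \<and> Sig \<noteq> {} \<and>
     r0 \<in> V \<and> lay r0 = 0 \<and>
     (\<forall>v\<in>V. lay v \<le> n) \<and>
     (\<forall>v\<in>V. lay v = 0 \<longrightarrow> v = r0) \<and>
     (\<forall>v\<in>V. lay v < n \<longrightarrow> (\<forall>a\<in>Sig. delta v a \<in> V \<and> lay (delta v a) = Suc (lay v)))"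

definition vtx :: "'v \<Rightarrow> ('v \<Rightarrow> 'a \<Rightarrow> 'v) \<Rightarrow> 'a list \<Rightarrow> 'v" where
  "vtx r0 delta p = foldl delta r0 p"

definition path_edges :: "'v \<Rightarrow> ('v \<Rightarrow> 'a \<Rightarrow> 'v) \<Rightarrow> 'a list \<Rightarrow> ('v \<times> 'a) set" where
  "path_edges r0 delta p = {(vtx r0 delta (take i p), p ! i) | i. i < length p}"

definition is_code ::
  "'a set \<Rightarrow> nat \<Rightarrow> 'v set \<Rightarrow> ('v \<Rightarrow> nat) \<Rightarrow> 'b set \<Rightarrow> ('v \<Rightarrow> 'a \<Rightarrow> 'b) \<Rightarrow> bool" where
  "is_code Sig n V lay SigOut C \<longleftrightarrow>
     (\<forall>v\<in>V. lay v < n \<longrightarrow> (\<forall>a\<in>Sig. C v a \<in> SigOut))"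

definition encode :: "'v \<Rightarrow> ('v \<Rightarrow> 'a \<Rightarrow> 'v) \<Rightarrow> ('v \<Rightarrow> 'a \<Rightarrow> 'b) \<Rightarrow> 'a list \<Rightarrow> 'b list" where
  "encode r0 delta C p = map (\<lambda>i. C (vtx r0 delta (take i p)) (p ! i)) [0..<length p]"

definition hamming :: "'b list \<Rightarrow> 'b list \<Rightarrow> nat" where
  "hamming x y = card {i. i < length x \<and> x ! i \<noteq> y ! i}"

text \<open>Suffix distance for strings of equal length m (0 for m = 0, the max over an empty range).\<close>
definition sfx_dist :: "'b list \<Rightarrow> 'b list \<Rightarrow> real" where
  "sfx_dist x y = (let m = length x in
     if m = 0 then 0
     else Max ((\<lambda>i. real (hamming (drop i x) (drop i y)) / real (m - i)) ` {0..<m}))"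

definition Li :: "'a set \<Rightarrow> 'v \<Rightarrow> ('v \<Rightarrow> 'a \<Rightarrow> 'v) \<Rightarrow> ('v \<Rightarrow> 'a \<Rightarrow> 'b) \<Rightarrow> 'b list \<Rightarrow> real \<Rightarrow> nat \<Rightarrow> 'v set" where
  "Li Sig r0 delta C w eps i =
     {vtx r0 delta p | p. set p \<subseteq> Sig \<and> length p = i \<and>
        sfx_dist (encode r0 delta C p) (take i w) < 1 - eps}"

definition Lset :: "'a set \<Rightarrow> nat \<Rightarrow> 'v \<Rightarrow> ('v \<Rightarrow> 'a \<Rightarrow> 'v) \<Rightarrow> ('v \<Rightarrow> 'a \<Rightarrow> 'b) \<Rightarrow> 'b list \<Rightarrow> real \<Rightarrow> 'v set" where
  "Lset Sig n r0 delta C w eps = (\<Union>i\<in>{1..n}. Li Sig r0 delta C w eps i)"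

definition rooted_tree :: "'v \<Rightarrow> ('v \<Rightarrow> 'a \<Rightarrow> 'v) \<Rightarrow> ('v \<times> 'a) set \<Rightarrow> bool" where
  "rooted_tree r0 delta E \<longleftrightarrow>
     (\<forall>x \<in> insert r0 ((\<lambda>(u, a). delta u a) ` E).
        \<exists>!q. path_edges r0 delta q \<subseteq> E \<and> vtx r0 delta q = x)"

definition is_prefix_tree ::
  "'a set \<Rightarrow> nat \<Rightarrow> 'v \<Rightarrow> ('v \<Rightarrow> 'a \<Rightarrow> 'v) \<Rightarrow> ('v \<Rightarrow> 'a \<Rightarrow> 'b) \<Rightarrow> 'b list \<Rightarrow> real
     \<Rightarrow> 'v set \<Rightarrow> ('v \<Rightarrow> 'a list) \<Rightarrow> bool" where
  "is_prefix_tree Sig n r0 delta C w eps S pt \<longleftrightarrow>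
     (\<forall>v\<in>S. set (pt v) \<subseteq> Sig \<and> length (pt v) \<le> n \<and> vtx r0 delta (pt v) = v \<and>
        sfx_dist (encode r0 delta C (pt v)) (take (length (pt v)) w) < 1 - eps) \<and>
     rooted_tree r0 delta (\<Union>v\<in>S. path_edges r0 delta (pt v))"

end

theory Submission
  imports Defs
begin

definition Mx :: "real \<Rightarrow> 'b list \<Rightarrow> 'b list \<Rightarrow> real" where
  "Mx c x y = Max ((\<lambda>j. real (hamming (drop j x) (drop j y)) - c * real (length x - j)) ` {0..<length x})"

lemma hamming_append:
  assumes "length a = length b"
  shows "hamming (a @ c) (b @ d) = hamming a b + hamming c d"
proof -
  have eq: "{i. i < length (a @ c) \<and> (a @ c) ! i \<noteq> (b @ d) ! i}
     = {i. i < length a \<and> a ! i \<noteq> b ! i} \<union> (\<lambda>i. i + length a) ` {i. i < length c \<and> c ! i \<noteq> d ! i}"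
    (is "?L = ?A \<union> ?B")
  proof (rule set_eqI)
    fix i show "i \<in> ?L \<longleftrightarrow> i \<in> ?A \<union> ?B"
    proof (cases "i < length a")
      case True then show ?thesis using assms by (auto simp: nth_append)
    next
      case False
      then have "i \<in> ?B \<longleftrightarrow> i - length a < length c \<and> c ! (i - length a) \<noteq> d ! (i - length a)"
        by (auto simp: image_iff intro!: exI[of _ "i - length a"])
      then show ?thesis using False assms by (auto simp: nth_append)
    qed
  qed
  have "card (?A \<union> ?B) = card ?A + card ?B"
    by (rule card_Un_disjoint) auto
  also have "card ?B = card {i. i < length c \<and> c ! i \<noteq> d ! i}"
    by (rule card_image) (auto simp: inj_on_def)
  finally show ?thesis unfolding hamming_def eq by simp
qed

lemma Mx_mono_append:
  assumes lx: "length x = k" and lx': "length x' = k" and ly: "length y = k" and k: "0 < k"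
    and le: "Mx c x' y \<le> Mx c x y"
  shows "Mx c (x' @ z) (y @ t) \<le> Mx c (x @ z) (y @ t)"
proof -
  let ?t = "\<lambda>x j. real (hamming (drop j x) (drop j y)) - c * real (length x - j)"
  let ?u = "\<lambda>x j. real (hamming (drop j (x @ z)) (drop j (y @ t))) - c * real (length (x @ z) - j)"
  have fin: "finite (?u x ` {0..<length (x @ z)})" "?u x ` {0..<length (x @ z)} \<noteq> {}" using lx k by auto
  have "Mx c x y \<in> ?t x ` {0..<length x}" unfolding Mx_def by (rule Max_in) (use lx k in auto)
  then obtain j0 where j0: "j0 < k" "Mx c x y = ?t x j0" using lx by auto
  have "?u x j0 = ?t x j0 + hamming z t - c * length z"
    using j0 lx ly by (simp add: hamming_append of_nat_diff algebra_simps)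
  have tj0: "?u x j0 = ?t x j0 + hamming z t - c * length z"
    using j0 lx ly by (simp add: hamming_append of_nat_diff algebra_simps)
  have Mxz: "?u x j0 \<le> Mx c (x @ z) (y @ t)"
    unfolding Mx_def by (rule Max_ge[OF fin(1)], rule imageI) (use j0 lx in auto)
  show ?thesis unfolding Mx_def[of c "x' @ z"]
  proof (subst Max_le_iff)
    show "finite (?u x' ` {0..<length (x' @ z)})" by simp
    show "?u x' ` {0..<length (x' @ z)} \<noteq> {}" using lx' k by auto
    show "\<forall>a\<in>?u x' ` {0..<length (x' @ z)}. a \<le> Mx c (x @ z) (y @ t)"
    proof
      fix a assume "a \<in> ?u x' ` {0..<length (x' @ z)}"
      then obtain j where j: "j < k + length z" "a = ?u x' j" using lx' by auto
      show "a \<le> Mx c (x @ z) (y @ t)"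
      proof (cases "j < k")
        case True
        have "a = ?t x' j + hamming z t - c * length z"
          using j True lx' ly by (simp add: hamming_append of_nat_diff algebra_simps)
        moreover have "?t x' j \<le> Mx c x' y"
          unfolding Mx_def by (rule Max_ge, simp, rule imageI) (use True lx' in auto)
        ultimately show ?thesis using le j0 tj0 Mxz by linarith
      next
        case False
        have "a = ?u x j" using j False lx lx' ly by simp
        also have "\<dots> \<le> Mx c (x @ z) (y @ t)"
          unfolding Mx_def by (rule Max_ge, simp, rule imageI) (use j lx in auto)
        finally show ?thesis .
      qed
    qed
  qed
qed

lemma sfx_Mx:
  assumes "length x = length y" "0 < length x"
  shows "sfx_dist x y < c \<longleftrightarrow> Mx c x y < 0"
proof -
  have "sfx_dist x y < c \<longleftrightarrow> (\<forall>j<length x. real (hamming (drop j x) (drop j y)) / real (length x - j) < c)"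
    unfolding sfx_dist_def Let_def using assms by (auto simp add: Max_less_iff)
  also have "\<dots> \<longleftrightarrow> (\<forall>j<length x. real (hamming (drop j x) (drop j y)) - c * real (length x - j) < 0)"
    by (intro all_cong) (simp add: pos_divide_less_eq algebra_simps)
  also have "\<dots> \<longleftrightarrow> Mx c x y < 0"
    unfolding Mx_def using assms by (auto simp add: Max_less_iff)
  finally show ?thesis .
qed

lemma vtx_snoc: "vtx r0 delta (p @ [a]) = delta (vtx r0 delta p) a" by (simp add: vtx_def)
lemma vtx_append: "vtx r0 delta (p @ q) = vtx (vtx r0 delta p) delta q" by (simp add: vtx_def)
lemma length_encode[simp]: "length (encode r0 delta C p) = length p" by (simp add: encode_def)
lemma encode_snoc: "encode r0 delta C (p @ [b]) = encode r0 delta C p @ [C (vtx r0 delta p) b]"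
  unfolding encode_def by (auto simp: nth_append)

lemma encode_append: "encode r0 delta C (p @ q) = encode r0 delta C p @ encode (vtx r0 delta p) delta C q"
proof (induction q rule: rev_induct)
  case Nil then show ?case by (simp add: encode_def)
next
  case (snoc b q)
  have "p @ q @ [b] = (p @ q) @ [b]" by simp
  then show ?case using snoc by (simp only: encode_snoc vtx_append) simp
qed

lemma path_edges_take: "path_edges r0 delta (take m p) \<subseteq> path_edges r0 delta p"
  unfolding path_edges_def by (auto simp: min_def)


lemma layer:
  assumes LG: "layered_graph Sig n V lay r0 delta"
  shows "set p \<subseteq> Sig \<Longrightarrow> length p \<le> n \<Longrightarrow> vtx r0 delta p \<in> V \<and> lay (vtx r0 delta p) = length p"
proof (induction p rule: rev_induct)
  case Nil then show ?case using LG by (simp add: layered_graph_def vtx_def)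
next
  case (snoc a p)
  then have "vtx r0 delta p \<in> V" "lay (vtx r0 delta p) = length p" "length p < n" "a \<in> Sig" by auto
  then show ?case using LG by (simp add: layered_graph_def vtx_snoc)
qed

definition Rk :: "'a set \<Rightarrow> 'v \<Rightarrow> ('v \<Rightarrow> 'a \<Rightarrow> 'v) \<Rightarrow> nat \<Rightarrow> 'v set" where
  "Rk Sig r0 delta k = {vtx r0 delta p | p. set p \<subseteq> Sig \<and> length p \<le> k}"

definition Mp :: "real \<Rightarrow> 'v \<Rightarrow> ('v \<Rightarrow> 'a \<Rightarrow> 'v) \<Rightarrow> ('v \<Rightarrow> 'a \<Rightarrow> 'b) \<Rightarrow> 'b list \<Rightarrow> 'a list \<Rightarrow> real" where
  "Mp c r0 delta C w p = Mx c (encode r0 delta C p) (take (length p) w)"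

definition goodT where
  "goodT Sig r0 delta lay C w c k T \<longleftrightarrow> (\<forall>x \<in> Rk Sig r0 delta k.
     set (T x) \<subseteq> Sig \<and> length (T x) = lay x \<and> vtx r0 delta (T x) = x \<and>
     (\<forall>i \<le> length (T x). T (vtx r0 delta (take i (T x))) = take i (T x)) \<and>
     (\<forall>q. set q \<subseteq> Sig \<and> vtx r0 delta q = x \<and> length q = lay x \<and> q \<noteq> [] \<longrightarrow>
        Mp c r0 delta C w (T x) \<le> Mp c r0 delta C w q))"

lemma Mp_mono:
  assumes "length a = k" "length a' = k" "0 < k" "k + length r \<le> length w"
    "vtx r0 delta a = vtx r0 delta a'" "Mp c r0 delta C w a' \<le> Mp c r0 delta C w a"
  shows "Mp c r0 delta C w (a' @ r) \<le> Mp c r0 delta C w (a @ r)"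
proof -
  have tw: "take (k + length r) w = take k w @ take (length r) (drop k w)" by (simp add: take_add)
  show ?thesis using assms unfolding Mp_def
    by (simp only: encode_append length_append tw) (rule Mx_mono_append, auto)
qed

lemma Rk_facts:
  assumes LG: "layered_graph Sig n V lay r0 delta" and "k \<le> n" and "y \<in> Rk Sig r0 delta k"
  shows "y \<in> V" "lay y \<le> k" "\<And>m. lay y \<le> m \<Longrightarrow> y \<in> Rk Sig r0 delta m"
proof -
  obtain p where p: "y = vtx r0 delta p" "set p \<subseteq> Sig" "length p \<le> k"
    using assms(3) unfolding Rk_def by auto
  then have "y \<in> V \<and> lay y = length p" using layer[OF LG, of p] assms(2) by auto
  then show "y \<in> V" "lay y \<le> k" "\<And>m. lay y \<le> m \<Longrightarrow> y \<in> Rk Sig r0 delta m"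
    using p unfolding Rk_def by auto
qed


lemma construct:
  assumes LG: "layered_graph Sig n V lay r0 delta" and lw: "length w = n"
  shows "k \<le> n \<Longrightarrow> \<exists>T. goodT Sig r0 delta lay C w c k T"
proof (induction k)
  case 0
  have "Rk Sig r0 delta 0 = {r0}" unfolding Rk_def by (auto simp: vtx_def)
  moreover have "lay r0 = 0" using LG by (simp add: layered_graph_def)
  ultimately have "goodT Sig r0 delta lay C w c 0 (\<lambda>_. [])"
    unfolding goodT_def by (simp add: vtx_def)
  then show ?case by blast
next
  case (Suc k)
  then obtain T where T: "goodT Sig r0 delta lay C w c k T" by auto
  have kn: "k \<le> n" "Suc k \<le> n" using Suc by auto
  define N where "N = {x \<in> Rk Sig r0 delta (Suc k). lay x = Suc k}"
  define cand where "cand x = {(u, a). u \<in> Rk Sig r0 delta k \<and> lay u = k \<and> a \<in> Sig \<and> delta u a = x}" for x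
  define f where "f = (\<lambda>(u, a). Mp c r0 delta C w (T u @ [a]))"
  have Sig: "finite Sig" "finite V" using LG by (auto simp: layered_graph_def)
  have "\<exists>ua \<in> cand x. \<forall>ub \<in> cand x. f ua \<le> f ub" if x: "x \<in> N" for x
  proof -
    have "cand x \<subseteq> V \<times> Sig" unfolding cand_def using Rk_facts(1)[OF LG kn(1)] by auto
    then have fin: "finite (cand x)" using Sig finite_subset by blast
    obtain p where p: "x = vtx r0 delta p" "set p \<subseteq> Sig" "length p \<le> Suc k"
      using x unfolding N_def Rk_def by auto
    have "lay x = length p" using layer[OF LG p(2)] p kn by auto
    then have lp: "length p = Suc k" using x unfolding N_def by auto
    then have pe: "p = butlast p @ [last p]" by (metis append_butlast_last_id list.size(3) nat.distinct(1))
    have bl1: "set (butlast p) \<subseteq> Sig" using p(2) by (meson in_set_butlastD subsetD subsetI)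
    have bl3: "last p \<in> Sig" using p(2) lp by (metis last_in_set list.size(3) nat.distinct(1) subsetD)
    have bl: "set (butlast p) \<subseteq> Sig" "length (butlast p) = k" "last p \<in> Sig"
      using bl1 bl3 lp by auto
    have "lay (vtx r0 delta (butlast p)) = k" using layer[OF LG bl(1)] bl kn by auto
    then have "(vtx r0 delta (butlast p), last p) \<in> cand x"
    proof -
      have d: "delta (vtx r0 delta (butlast p)) (last p) = x" using p(1) pe vtx_snoc by metis
      have "vtx r0 delta (butlast p) \<in> Rk Sig r0 delta k" unfolding Rk_def using bl by blast
      then show ?thesis unfolding cand_def using d bl \<open>lay (vtx r0 delta (butlast p)) = k\<close> by blast
    qed
    then have ne: "cand x \<noteq> {}" by auto
    show ?thesis using arg_min_if_finite[OF fin ne, of f] by (meson not_le)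
  qed
  then obtain ch where ch: "\<And>x. x \<in> N \<Longrightarrow> ch x \<in> cand x \<and> (\<forall>ub \<in> cand x. f (ch x) \<le> f ub)"
    by metis
  define T' where "T' x = (if x \<in> N then T (fst (ch x)) @ [snd (ch x)] else T x)" for x
  have "goodT Sig r0 delta lay C w c (Suc k) T'"
    unfolding goodT_def
  proof
    fix x assume x: "x \<in> Rk Sig r0 delta (Suc k)"
    show "set (T' x) \<subseteq> Sig \<and> length (T' x) = lay x \<and> vtx r0 delta (T' x) = x \<and>
     (\<forall>i \<le> length (T' x). T' (vtx r0 delta (take i (T' x))) = take i (T' x)) \<and>
     (\<forall>q. set q \<subseteq> Sig \<and> vtx r0 delta q = x \<and> length q = lay x \<and> q \<noteq> [] \<longrightarrow>
        Mp c r0 delta C w (T' x) \<le> Mp c r0 delta C w q)"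
    proof (cases "x \<in> N")
      case False
      then have lx: "lay x \<le> k" using Rk_facts(2)[OF LG kn(2) x] unfolding N_def using x by auto
      then have xk: "x \<in> Rk Sig r0 delta k" using Rk_facts(3)[OF LG kn(2) x] by auto
      have T'x: "T' x = T x" using False by (simp add: T'_def)
      have Tx: "set (T x) \<subseteq> Sig" "length (T x) = lay x" "vtx r0 delta (T x) = x"
        "\<forall>i \<le> length (T x). T (vtx r0 delta (take i (T x))) = take i (T x)"
        "\<forall>q. set q \<subseteq> Sig \<and> vtx r0 delta q = x \<and> length q = lay x \<and> q \<noteq> [] \<longrightarrow>
        Mp c r0 delta C w (T x) \<le> Mp c r0 delta C w q"
        using T xk unfolding goodT_def by blast+
      have "T' (vtx r0 delta (take i (T x))) = take i (T x)" if i: "i \<le> length (T x)" for i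
      proof -
        have "set (take i (T x)) \<subseteq> Sig" using Tx(1) by (meson set_take_subset subset_trans)
        then have "lay (vtx r0 delta (take i (T x))) = i"
          using layer[OF LG, of "take i (T x)"] i Tx(2) lx kn by auto
        then have "vtx r0 delta (take i (T x)) \<notin> N" using i Tx(2) lx unfolding N_def by auto
        then show ?thesis using Tx(4) i by (simp add: T'_def)
      qed
      then show ?thesis using Tx T'x by simp
    next
      case True
      obtain u a where ua: "ch x = (u, a)" by fastforce
      have uc: "u \<in> Rk Sig r0 delta k" "lay u = k" "a \<in> Sig" "delta u a = x"
        using ch[OF True] ua unfolding cand_def by auto
      have T'x: "T' x = T u @ [a]" using True ua by (simp add: T'_def)
      have Tu: "set (T u) \<subseteq> Sig" "length (T u) = lay u" "vtx r0 delta (T u) = u"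
        "\<forall>i \<le> length (T u). T (vtx r0 delta (take i (T u))) = take i (T u)"
        using T uc(1) unfolding goodT_def by blast+
      have lx: "lay x = Suc k" using True unfolding N_def by auto
      have pre: "T' (vtx r0 delta (take i (T' x))) = take i (T' x)" if i: "i \<le> length (T' x)" for i
      proof (cases "i = Suc k")
        case True
        then show ?thesis using T'x Tu uc by (simp add: vtx_snoc)
      next
        case False
        then have ik: "i \<le> k" using i T'x Tu uc by simp
        have tk: "take i (T' x) = take i (T u)" using ik T'x Tu uc by simp
        have "set (take i (T u)) \<subseteq> Sig" using Tu(1) by (meson set_take_subset subset_trans)
        then have "lay (vtx r0 delta (take i (T u))) = i"
          using layer[OF LG, of "take i (T u)"] ik Tu(2) uc kn by auto
        then have "vtx r0 delta (take i (T u)) \<notin> N" using ik unfolding N_def by auto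
        then show ?thesis using Tu(4) ik Tu uc tk by (simp add: T'_def)
      qed
      have opt: "Mp c r0 delta C w (T' x) \<le> Mp c r0 delta C w q"
        if q: "set q \<subseteq> Sig" "vtx r0 delta q = x" "length q = lay x" "q \<noteq> []" for q
      proof -
        have qe: "q = butlast q @ [last q]" using q(4) by simp
        let ?q' = "butlast q" and ?b = "last q"
        have bl: "set ?q' \<subseteq> Sig" "length ?q' = k" "?b \<in> Sig"
          using q lx by (auto dest: in_set_butlastD)
        have lu': "lay (vtx r0 delta ?q') = k" using layer[OF LG bl(1)] bl kn by auto
        have u'R: "vtx r0 delta ?q' \<in> Rk Sig r0 delta k" unfolding Rk_def using bl by auto
        have "(vtx r0 delta ?q', ?b) \<in> cand x"
        proof -
          have d: "delta (vtx r0 delta ?q') ?b = x" using q(2) qe vtx_snoc by metis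
          then show ?thesis unfolding cand_def using d bl u'R lu' by blast
        qed
        then have "f (ch x) \<le> f (vtx r0 delta ?q', ?b)" using ch[OF True] by blast
        then have 1: "Mp c r0 delta C w (T' x) \<le> Mp c r0 delta C w (T (vtx r0 delta ?q') @ [?b])"
          using ua T'x by (simp add: f_def)
        have Tu': "length (T (vtx r0 delta ?q')) = k" "vtx r0 delta (T (vtx r0 delta ?q')) = vtx r0 delta ?q'"
          "\<forall>q. set q \<subseteq> Sig \<and> vtx r0 delta q = vtx r0 delta ?q' \<and> length q = k \<and> q \<noteq> [] \<longrightarrow>
           Mp c r0 delta C w (T (vtx r0 delta ?q')) \<le> Mp c r0 delta C w q"
          using T u'R lu' unfolding goodT_def by auto
        have 2: "Mp c r0 delta C w (T (vtx r0 delta ?q') @ [?b]) \<le> Mp c r0 delta C w (?q' @ [?b])"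
        proof (cases "k = 0")
          case True
          then have "?q' = []" using bl(2) by (simp del: length_butlast)
          then show ?thesis using Tu' True by simp
        next
          case False
          show ?thesis
          proof (rule Mp_mono[where k = k])
            have ne: "?q' \<noteq> []" using False bl(2) by (metis list.size(3))
            show "Mp c r0 delta C w (T (vtx r0 delta ?q')) \<le> Mp c r0 delta C w ?q'"
              using Tu'(3) bl ne by blast
          qed (use False Tu' bl kn lw in auto)
        qed
        show ?thesis using 1 2 qe by simp
      qed
      show ?thesis using T'x Tu uc lx pre opt by (simp add: vtx_snoc)
    qed
  qed
  then show ?case by blast
qed


theorem lemma5p4:
  fixes Sig :: "'a set" and SigOut :: "'b set" and n :: nat
    and V :: "'v set" and lay :: "'v \<Rightarrow> nat" and r0 :: 'v
    and delta :: "'v \<Rightarrow> 'a \<Rightarrow> 'v" and C :: "'v \<Rightarrow> 'a \<Rightarrow> 'b"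
    and w :: "'b list" and eps :: real and S :: "'v set"
  assumes "layered_graph Sig n V lay r0 delta"
    and "finite SigOut" and "SigOut \<noteq> {}"
    and "is_code Sig n V lay SigOut C"
    and "set w \<subseteq> SigOut" and "length w = n"
    and "eps > 0"
    and "S \<subseteq> Lset Sig n r0 delta C w eps"
  shows "\<exists>pt. is_prefix_tree Sig n r0 delta C w eps S pt"
proof -
  note LG = assms(1) and lw = assms(6)
  let ?c = "1 - eps"
  obtain T where T: "goodT Sig r0 delta lay C w ?c n T" using construct[OF LG lw, of n C ?c] by auto
  have TR: "set (T x) \<subseteq> Sig" "length (T x) = lay x" "vtx r0 delta (T x) = x"
     "\<forall>i \<le> length (T x). T (vtx r0 delta (take i (T x))) = take i (T x)"
     "\<forall>q. set q \<subseteq> Sig \<and> vtx r0 delta q = x \<and> length q = lay x \<and> q \<noteq> [] \<longrightarrow>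
        Mp ?c r0 delta C w (T x) \<le> Mp ?c r0 delta C w q"
    if "x \<in> Rk Sig r0 delta n" for x
    using T that unfolding goodT_def by blast+
  have r0R: "r0 \<in> Rk Sig r0 delta n" unfolding Rk_def by (auto simp: vtx_def intro!: exI[of _ "[]"])
  have lr0: "lay r0 = 0" using LG by (simp add: layered_graph_def)
  have Tr0: "T r0 = []" using TR(2)[OF r0R] lr0 by simp
  have SR: "v \<in> Rk Sig r0 delta n \<and> lay v \<le> n \<and>
      sfx_dist (encode r0 delta C (T v)) (take (length (T v)) w) < ?c" if v: "v \<in> S" for v
  proof -
    obtain i p where ip: "i \<in> {1..n}" "v = vtx r0 delta p" "set p \<subseteq> Sig" "length p = i"
      "sfx_dist (encode r0 delta C p) (take i w) < ?c"
      using v assms(8) unfolding Lset_def Li_def by blast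
    have vR: "v \<in> Rk Sig r0 delta n" unfolding Rk_def using ip by auto
    have lv: "lay v = i" using layer[OF LG ip(3)] ip by auto
    have "Mx ?c (encode r0 delta C p) (take i w) < 0"
      using ip lw sfx_Mx[of "encode r0 delta C p" "take i w" ?c] by auto
    moreover have "Mp ?c r0 delta C w (T v) \<le> Mp ?c r0 delta C w p"
      using TR(5)[OF vR] ip lv by auto
    ultimately have "Mx ?c (encode r0 delta C (T v)) (take i w) < 0"
      using TR(2)[OF vR] lv ip unfolding Mp_def by simp
    then have "sfx_dist (encode r0 delta C (T v)) (take i w) < ?c"
      using ip lw TR(2)[OF vR] lv sfx_Mx[of "encode r0 delta C (T v)" "take i w" ?c] by auto
    then show ?thesis using vR lv TR(2)[OF vR] ip by auto
  qed
  define E where "E = (\<Union>v\<in>S. path_edges r0 delta (T v))"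
  have uniq: "q = T (vtx r0 delta q)" if "path_edges r0 delta q \<subseteq> E" for q
    using that
  proof (induction q rule: rev_induct)
    case Nil then show ?case using Tr0 by (simp add: vtx_def)
  next
    case (snoc b q)
    have "path_edges r0 delta q \<subseteq> path_edges r0 delta (q @ [b])"
      using path_edges_take[of r0 delta "length q" "q @ [b]"] by simp
    then have IH: "q = T (vtx r0 delta q)" using snoc by blast
    have "(vtx r0 delta q, b) \<in> path_edges r0 delta (q @ [b])"
      unfolding path_edges_def by (auto intro!: exI[of _ "length q"])
    then obtain v i where vi: "v \<in> S" "i < length (T v)" "vtx r0 delta q = vtx r0 delta (take i (T v))"
      "b = T v ! i"
      using snoc(2) unfolding E_def path_edges_def by blast
    have vR: "v \<in> Rk Sig r0 delta n" using SR vi(1) by blast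
    have "q = take i (T v)" using IH vi TR(4)[OF vR] by auto
    then have qb: "q @ [b] = take (Suc i) (T v)" using vi by (simp add: take_Suc_conv_app_nth)
    show ?case using TR(4)[OF vR] vi(2) qb by simp
  qed
  have "rooted_tree r0 delta E"
    unfolding rooted_tree_def
  proof
    fix x assume x: "x \<in> insert r0 ((\<lambda>(u, a). delta u a) ` E)"
    have "\<exists>q. path_edges r0 delta q \<subseteq> E \<and> vtx r0 delta q = x"
    proof (cases "x = r0")
      case True then show ?thesis by (auto simp: path_edges_def vtx_def intro!: exI[of _ "[]"])
    next
      case False
      then obtain u a where ua: "(u, a) \<in> E" "x = delta u a" using x by auto
      then obtain v i where vi: "v \<in> S" "i < length (T v)" "u = vtx r0 delta (take i (T v))"
        "a = T v ! i"
        unfolding E_def path_edges_def by blast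
      have "path_edges r0 delta (take (Suc i) (T v)) \<subseteq> E"
        using path_edges_take[of r0 delta "Suc i" "T v"] vi(1) unfolding E_def by blast
      moreover have "vtx r0 delta (take (Suc i) (T v)) = x"
        using vi ua by (simp add: take_Suc_conv_app_nth vtx_snoc)
      ultimately show ?thesis by blast
    qed
    then show "\<exists>!q. path_edges r0 delta q \<subseteq> E \<and> vtx r0 delta q = x"
      using uniq by metis
  qed
  then have "is_prefix_tree Sig n r0 delta C w eps S T"
    unfolding is_prefix_tree_def E_def[symmetric]
  proof (intro conjI ballI)
    fix v assume v: "v \<in> S"
    then have vR: "v \<in> Rk Sig r0 delta n" using SR by blast
    show "set (T v) \<subseteq> Sig" using TR(1)[OF vR] .
    show "length (T v) \<le> n" using TR(2)[OF vR] SR[OF v] by simp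
    show "vtx r0 delta (T v) = v" using TR(3)[OF vR] .
    show "sfx_dist (encode r0 delta C (T v)) (take (length (T v)) w) < 1 - eps" using SR[OF v] by blast
  qed
  then show ?thesis by blast
qed

end
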